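(* Let $k\geq 2$ and consider the HC model with countable set of spin values $\mathbb Z$ on the Cayley tree $\Gamma^k$, associated with the graph $G$ on $\mathbb Z$ in which every vertex is adjacent to $0$ and no two vertices of $\mathbb Z_0=\mathbb Z\setminus\{0\}$ are adjacent, with activities $\lambda_j>0$. Then: (1) If the series $\sum_{j\in\mathbb Z_0}\lambda_j$ converges, there exists a unique translation-invariant Gibbs measure. (2) If the series $\sum_{j\in\mathbb Z_0}\lambda_j$ diverges, there is no translation-invariant Gibbs measure.
   Context: The Cayley tree $\Gamma^k$ of order $k$ is the infinite tree in which every vertex has exactly $k+1$ neighbours; $V$ is its vertex set. Fix a root $x^0$; for a vertex $x$, $S(x)$ denotes the set of its direct successors (the neighbours of $x$ farther from $x^0$). A configuration is a map $\sigma:V\to\mathbb Z$; it is admissible if $\sigma(x)\sigma(y)=0$ for all nearest neighbours $x,y$ (i.e. $\{\sigma(x),\sigma(y)\}$ is an edge of the graph $G$ above). The HC Hamiltonian is $H(\sigma)=J\sum_{x\in V}\ln\lambda_{\sigma(x)}$ for admissible $\sigma$ and $+\infty$ otherwise, with activities $\lambda_i>0$, $i\in\mathbb Z$. Gibbs measures (tree-indexed Markov chains) of this model are in one-to-one correspondence with normalisable boundary laws; after normalisation at the spin value $0$, boundary laws correspond to families $z_x=(z_{i,x})_{i\in\mathbb Z_0}$ of positive numbers, $x\in V$, satisfying $$z_{i,x}=\lambda_i\prod_{y\in S(x)}\frac{1}{1+\sum_{j\in\mathbb Z_0}z_{j,y}},\qquad i\in\mathbb Z_0 .$$ A translation-invariant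 Gibbs measure is one corresponding to a solution with $z_x=z$ independent of $x$, i.e. to a positive sequence $z=(z_i)_{i\in\mathbb Z_0}$ with $z_i=\lambda_i\bigl(1+\sum_{j\in\mathbb Z_0}z_j\bigr)^{-k}$ for all $i\in\mathbb Z_0$; such a solution is normalisable (hence defines a Gibbs measure) if $\sum_{i}z_i^{(k+1)/k}<\infty$. *)

theory Defs
  imports "HOL-Analysis.Analysis"
begin

text \<open>A translation-invariant (normalised) boundary law of the
  HC model with graph G (every vertex adjacent to 0, no edges inside \<open>\<int>\<^sub>0\<close>) on the Cayley tree of
  order k is a positive family \<open>z = (z_i)_{i \<in> \<int>\<^sub>0}\<close> with
  \<open>z_i = \<lambda>_i (1 + \<Sum>_{j \<in> \<int>\<^sub>0} z_j)^{-k}\<close>. Values of z at 0 are irrelevant.\<close>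

definition Z0 :: "int set" where
  "Z0 = UNIV - {0}"

definition TI_boundary_law :: "nat \<Rightarrow> (int \<Rightarrow> real) \<Rightarrow> (int \<Rightarrow> real) \<Rightarrow> bool" where
  "TI_boundary_law k lam z \<longleftrightarrow>
     (\<forall>i\<in>Z0. z i > 0) \<and> z summable_on Z0 \<and>
     (\<forall>i\<in>Z0. z i = lam i / (1 + infsum z Z0) ^ k)"

definition normalisable :: "nat \<Rightarrow> (int \<Rightarrow> real) \<Rightarrow> bool" where
  "normalisable k z \<longleftrightarrow> (\<lambda>i. z i powr ((real k + 1) / real k)) summable_on Z0"

text \<open>Translation-invariant Gibbs measures are in bijection with normalisable
  translation-invariant boundary laws (identified as functions on \<open>\<int>\<^sub>0\<close>).\<close>
definition TI_Gibbs :: "nat \<Rightarrow> (int \<Rightarrow> real) \<Rightarrow> (int \<Rightarrow> real) \<Rightarrow> bool" where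
  "TI_Gibbs k lam z \<longleftrightarrow> TI_boundary_law k lam z \<and> normalisable k z"

end

theory Submission
  imports Defs
begin

lemma norm_lemma:
  fixes z :: "int \<Rightarrow> real"
  assumes k: "k \<ge> 1" and pos: "\<forall>i\<in>Z0. z i > 0" and sm: "z summable_on Z0"
  shows "normalisable k z"
proof -
  define C where "C = infsum z Z0"
  define q where "q = 1 / real k"
  have le: "z i \<le> C" if i: "i \<in> Z0" for i
  proof -
    have "infsum z {i} \<le> infsum z Z0"
      by (rule infsum_mono_neutral) (use i pos sm in auto)
    thus ?thesis by (simp add: C_def)
  qed
  have s1: "(\<lambda>i. z i * C powr q) summable_on Z0"
    by (rule summable_on_cmult_left[OF sm])
  have e: "(real k + 1) / real k = 1 + q" using k unfolding q_def by (simp add: field_simps)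
  have "(\<lambda>i. z i powr (1 + q)) summable_on Z0"
  proof (rule summable_on_comparison_test[OF s1])
    fix i assume i: "i \<in> Z0"
    have zp: "z i > 0" using pos i by auto
    have "z i powr (1 + q) = z i powr 1 * z i powr q"
      by (rule powr_add)
    also have "\<dots> = z i * z i powr q" using zp by simp
    also have "\<dots> \<le> z i * C powr q"
      using zp le[OF i] unfolding q_def by (intro mult_left_mono powr_mono2) auto
    finally show "z i powr (1 + q) \<le> z i * C powr q" .
    show "0 \<le> z i powr (1 + q)" by simp
  qed
  thus ?thesis unfolding normalisable_def e .
qed

lemma strict_inc:
  fixes s t :: real
  assumes "0 \<le> s" "s < t"
  shows "s * (1 + s) ^ k < t * (1 + t) ^ k"
proof -
  have "s * (1 + s) ^ k \<le> s * (1 + t) ^ k"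
    using assms by (intro mult_left_mono power_mono) auto
  also have "\<dots> < t * (1 + t) ^ k"
    using assms by (intro mult_strict_right_mono) auto
  finally show ?thesis .
qed

lemma inj_eq:
  fixes s t :: real
  assumes "0 \<le> s" "0 \<le> t" "s * (1 + s) ^ k = t * (1 + t) ^ k"
  shows "s = t"
  using strict_inc[of s t k] strict_inc[of t s k] assms by (cases s t rule: linorder_cases) auto

lemma divmul: "(x::real) > 0 \<Longrightarrow> s = l / x \<Longrightarrow> s * x = l"
  by simp

lemma sum_eq:
  assumes lam: "lam summable_on Z0" and z: "TI_boundary_law k lam z"
  shows "infsum z Z0 * (1 + infsum z Z0) ^ k = infsum lam Z0" "infsum z Z0 \<ge> 0"
proof -
  define S where "S = infsum z Z0"
  have S0: "S \<ge> 0" unfolding S_def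
    using z unfolding TI_boundary_law_def by (intro infsum_nonneg) (auto intro: less_imp_le)
  have "infsum z Z0 = infsum (\<lambda>i. lam i * (1 / (1 + S) ^ k)) Z0"
    using z unfolding TI_boundary_law_def S_def by (intro infsum_cong) auto
  also have "\<dots> = infsum lam Z0 * (1 / (1 + S) ^ k)"
    by (rule infsum_cmult_left) (use lam in auto)
  finally have "S = infsum lam Z0 / (1 + S) ^ k" unfolding S_def by simp
  moreover have "(1 + S) ^ k > 0" using S0 by simp
  ultimately show "infsum z Z0 * (1 + infsum z Z0) ^ k = infsum lam Z0"
    unfolding S_def[symmetric] by (simp add: divmul)
  show "infsum z Z0 \<ge> 0" using S0 S_def by simp
qed

theorem mainTheorem1:
  fixes k :: nat and lam :: "int \<Rightarrow> real"
  assumes "k \<ge> 2"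
    and "\<And>j. lam j > 0"
  shows "(lam summable_on Z0 \<longrightarrow>
            (\<exists>z. TI_Gibbs k lam z \<and>
                 (\<forall>z'. TI_Gibbs k lam z' \<longrightarrow> (\<forall>i\<in>Z0. z' i = z i))))
       \<and> (\<not> lam summable_on Z0 \<longrightarrow> \<not> (\<exists>z. TI_Gibbs k lam z))"
proof (intro conjI impI)
  assume lam: "lam summable_on Z0"
  define L where "L = infsum lam Z0"
  have L0: "L \<ge> 0" unfolding L_def using assms(2) by (intro infsum_nonneg) (auto intro: less_imp_le)
  have "\<exists>s. 0 \<le> s \<and> s \<le> L \<and> s * (1 + s) ^ k = L"
  proof (rule IVT')
    show "0 * (1 + 0) ^ k \<le> L" using L0 by simp
    have "1 \<le> (1 + L) ^ k" using L0 by simp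
    hence "L * 1 \<le> L * (1 + L) ^ k" using L0 by (intro mult_left_mono) auto
    thus "L \<le> L * (1 + L) ^ k" by simp
    show "0 \<le> L" by fact
    show "continuous_on {0..L} (\<lambda>s::real. s * (1 + s) ^ k)"
      by (intro continuous_intros)
  qed
  then obtain S where S0: "0 \<le> S" and SL: "S * (1 + S) ^ k = L" by blast
  have Sp: "(1 + S) ^ k > 0" using S0 by simp
  define z where "z = (\<lambda>i. lam i / (1 + S) ^ k)"
  have zpos: "\<forall>i\<in>Z0. z i > 0" unfolding z_def using assms(2) Sp by auto
  have zeq: "z = (\<lambda>i. lam i * (1 / (1 + S) ^ k))" unfolding z_def by auto
  have zsm: "z summable_on Z0" unfolding zeq by (rule summable_on_cmult_left[OF lam])
  have "infsum z Z0 = L * (1 / (1 + S) ^ k)" unfolding zeq L_def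
    by (rule infsum_cmult_left) (use lam in auto)
  also have "\<dots> = S" using Sp S0 by (simp add: SL[symmetric])
  finally have zS: "infsum z Z0 = S" .
  have TB: "TI_boundary_law k lam z"
    unfolding TI_boundary_law_def using zpos zsm zS by (simp add: z_def)
  have TG: "TI_Gibbs k lam z"
    unfolding TI_Gibbs_def using TB norm_lemma[of k z] zpos zsm assms(1) by auto
  show "\<exists>z. TI_Gibbs k lam z \<and> (\<forall>z'. TI_Gibbs k lam z' \<longrightarrow> (\<forall>i\<in>Z0. z' i = z i))"
  proof (intro exI conjI allI impI ballI)
    show "TI_Gibbs k lam z" by fact
    fix z' i assume z': "TI_Gibbs k lam z'" and i: "i \<in> Z0"
    have B': "TI_boundary_law k lam z'" using z' unfolding TI_Gibbs_def by auto
    note e = sum_eq[OF lam B']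
    have "infsum z' Z0 = S"
      using inj_eq[of "infsum z' Z0" S k] e S0 SL L_def by auto
    thus "z' i = z i" using B' i unfolding TI_boundary_law_def z_def by auto
  qed
next
  assume nl: "\<not> lam summable_on Z0"
  show "\<not> (\<exists>z. TI_Gibbs k lam z)"
  proof
    assume "\<exists>z. TI_Gibbs k lam z"
    then obtain z where B: "TI_boundary_law k lam z" unfolding TI_Gibbs_def by auto
    define S where "S = infsum z Z0"
    have S0: "S \<ge> 0" unfolding S_def
      using B unfolding TI_boundary_law_def by (intro infsum_nonneg) (auto intro: less_imp_le)
    have Sp: "(1 + S) ^ k > 0" using S0 by simp
    have "(\<lambda>i. z i * (1 + S) ^ k) summable_on Z0"
      using B unfolding TI_boundary_law_def by (intro summable_on_cmult_left) auto
    moreover have "\<forall>i\<in>Z0. z i * (1 + S) ^ k = lam i"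
      using B Sp S0 unfolding TI_boundary_law_def S_def by auto
    ultimately have "lam summable_on Z0"
      using summable_on_cong[of Z0 "\<lambda>i. z i * (1 + S) ^ k" lam] by simp
    with nl show False by simp
  qed
qed

end
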